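(* Let $|\psi\rangle=\sum_{v,c,w,d}a_{vc,wd}|v\rangle_A|c,w\rangle_B|d\rangle_C$ be a state on $\mathbb{C}^R\otimes(\mathbb{C}^\kappa\otimes\mathbb{C}^R)\otimes\mathbb{C}^\kappa$ (registers 1,2,3,4 with register 1 $=A$, registers 2,3 $=B$, register 4 $=C$), and let $\rho_{B,C}=\mathrm{Tr}_A(|\psi\rangle\langle\psi|)$. Suppose $\mathsf{MatchCheck}$ succeeds on $|\psi\rangle$ with probability $1-\epsilon$ and $\rho_{B,C}$ is separable across $B|C$. Then there is a state $|\phi\rangle$ that is quasirigid after applying $\mathrm{CNOT}_{1,3}\mathrm{CNOT}_{2,4}$ such that $|\langle\phi|\psi\rangle|^2\ge 1-(\kappa+1)\epsilon$.
   Context: $\mathsf{MatchCheck}$ measures all four registers in the computational basis, obtaining $(v,c,w,d)$, and accepts iff $(v,c)=(w,d)$; its success probability on $|\psi\rangle$ is $\sum_{v,c}|a_{vc,vc}|^2$. $\mathrm{CNOT}_{i,j}$ maps $|x\rangle_i|y\rangle_j\mapsto|x\rangle_i|y\oplus x\rangle_j$, with $\oplus$ addition modulo the register dimension (registers 1 and 3 have dimension $R$, registers 2 and 4 dimension $\kappa$). A bipartite state in $\mathbb{C}^R\otimes\mathbb{C}^\kappa$ is quasirigid if it has the form $\sum_{v\in[R]}\alpha_v|v\rangle|c_v\rangle$ for complex $\alpha_v$ and indices $c_v\in[\kappa]$, and rigid if moreover all $\alpha_v=1/\sqrt R$. A four-register state is "quasirigid after applying $\mathrm{CNOT}_{1,3}\mathrm{CNOT}_{2,4}$"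 if it has the form $\sum_v\alpha_v|v\rangle|c_v\rangle|v\rangle|c_v\rangle$, i.e. applying these CNOTs yields a quasirigid state on registers 1,2 tensored with $|0\rangle|0\rangle$ on registers 3,4. *)

theory Defs
  imports Complex_Main
begin

text \<open>A four-register state is a function psi v c w d (amplitude a_{vc,wd}),
  with v, w < R and c, d < kappa.\<close>

definition is_state4 :: "nat \<Rightarrow> nat \<Rightarrow> (nat \<Rightarrow> nat \<Rightarrow> nat \<Rightarrow> nat \<Rightarrow> complex) \<Rightarrow> bool" where
  "is_state4 R \<kappa> psi \<longleftrightarrow>
     (\<Sum>v<R. \<Sum>c<\<kappa>. \<Sum>w<R. \<Sum>d<\<kappa>. (cmod (psi v c w d))\<^sup>2) = 1"

definition inner4 :: "nat \<Rightarrow> nat \<Rightarrow> (nat \<Rightarrow> nat \<Rightarrow> nat \<Rightarrow> nat \<Rightarrow> complex)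
    \<Rightarrow> (nat \<Rightarrow> nat \<Rightarrow> nat \<Rightarrow> nat \<Rightarrow> complex) \<Rightarrow> complex" where
  "inner4 R \<kappa> phi psi =
     (\<Sum>v<R. \<Sum>c<\<kappa>. \<Sum>w<R. \<Sum>d<\<kappa>. cnj (phi v c w d) * psi v c w d)"

definition matchcheck_prob :: "nat \<Rightarrow> nat \<Rightarrow> (nat \<Rightarrow> nat \<Rightarrow> nat \<Rightarrow> nat \<Rightarrow> complex) \<Rightarrow> real" where
  "matchcheck_prob R \<kappa> psi = (\<Sum>v<R. \<Sum>c<\<kappa>. (cmod (psi v c v c))\<^sup>2)"

text \<open>Reduced state on B (registers 2,3) and C (register 4): trace out register 1 (A).
  Row index ((c,w),d), column index ((c',w'),d').\<close>
definition rhoBC :: "nat \<Rightarrow> (nat \<Rightarrow> nat \<Rightarrow> nat \<Rightarrow> nat \<Rightarrow> complex)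
    \<Rightarrow> (nat \<times> nat) \<times> nat \<Rightarrow> (nat \<times> nat) \<times> nat \<Rightarrow> complex" where
  "rhoBC R psi = (\<lambda>((c,w),d) ((c',w'),d'). \<Sum>v<R. psi v c w d * cnj (psi v c' w' d'))"

definition density_on :: "'a set \<Rightarrow> ('a \<Rightarrow> 'a \<Rightarrow> complex) \<Rightarrow> bool" where
  "density_on S M \<longleftrightarrow>
     (\<forall>x :: 'a \<Rightarrow> complex. (\<Sum>i\<in>S. \<Sum>j\<in>S. cnj (x i) * M i j * x j) \<in> \<real> \<and>
        Re (\<Sum>i\<in>S. \<Sum>j\<in>S. cnj (x i) * M i j * x j) \<ge> 0) \<and>
     (\<Sum>i\<in>S. M i i) = 1"

definition separable_on :: "'b set \<Rightarrow> 'c set \<Rightarrow> ('b \<times> 'c \<Rightarrow> 'b \<times> 'c \<Rightarrow> complex) \<Rightarrow> bool" where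
  "separable_on SB SC \<rho> \<longleftrightarrow>
     (\<exists>(n::nat) (p::nat \<Rightarrow> real) \<sigma> \<tau>.
        (\<forall>i<n. p i \<ge> 0) \<and> (\<Sum>i<n. p i) = 1 \<and>
        (\<forall>i<n. density_on SB (\<sigma> i) \<and> density_on SC (\<tau> i)) \<and>
        (\<forall>b\<in>SB. \<forall>c\<in>SC. \<forall>b'\<in>SB. \<forall>c'\<in>SC.
            \<rho> (b,c) (b',c') = (\<Sum>i<n. complex_of_real (p i) * \<sigma> i b b' * \<tau> i c c')))"

definition quasirigid_after_cnot :: "nat \<Rightarrow> nat \<Rightarrow> (nat \<Rightarrow> nat \<Rightarrow> nat \<Rightarrow> nat \<Rightarrow> complex) \<Rightarrow> bool" where
  "quasirigid_after_cnot R \<kappa> phi \<longleftrightarrow>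
     (\<exists>(\<alpha>::nat \<Rightarrow> complex) (cv::nat \<Rightarrow> nat). (\<forall>v<R. cv v < \<kappa>) \<and>
        (\<forall>v<R. \<forall>c<\<kappa>. \<forall>w<R. \<forall>d<\<kappa>.
           phi v c w d = (if c = cv v \<and> w = v \<and> d = cv v then \<alpha> v else 0)))"

end

theory Submission
  imports Defs
begin


lemma sum_two_supp:
  fixes g :: "'a \<Rightarrow> complex"
  assumes "finite S" "i \<in> S" "j \<in> S" "i \<noteq> j" "\<And>k. k \<in> S \<Longrightarrow> k \<noteq> i \<Longrightarrow> k \<noteq> j \<Longrightarrow> g k = 0"
  shows "(\<Sum>k\<in>S. g k) = g i + g j"
proof -
  have "(\<Sum>k\<in>S. g k) = (\<Sum>k\<in>{i,j}. g k)"
    by (rule sum.mono_neutral_right) (use assms in auto)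
  then show ?thesis using assms(4) by simp
qed

lemma qform2:
  fixes M :: "'a \<Rightarrow> 'a \<Rightarrow> complex"
  assumes "finite S" "i \<in> S" "j \<in> S" "i \<noteq> j"
    and x: "x = (\<lambda>k. if k = i then t else if k = j then s else 0)"
  shows "(\<Sum>k\<in>S. \<Sum>l\<in>S. cnj (x k) * M k l * x l)
     = cnj t * M i i * t + cnj t * M i j * s + cnj s * M j i * t + cnj s * M j j * s"
proof -
  have xi: "x i = t" and xj: "x j = s" and xo: "\<And>k. k \<noteq> i \<Longrightarrow> k \<noteq> j \<Longrightarrow> x k = 0"
    using assms(4) unfolding x by auto
  have inner: "(\<Sum>l\<in>S. cnj (x k) * M k l * x l) = cnj (x k) * M k i * t + cnj (x k) * M k j * s" for k
    by (subst sum_two_supp[OF assms(1-4)]) (simp_all add: xi xj xo)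
  have "(\<Sum>k\<in>S. \<Sum>l\<in>S. cnj (x k) * M k l * x l) = (\<Sum>k\<in>S. cnj (x k) * M k i * t + cnj (x k) * M k j * s)"
    by (simp only: inner)
  also have "\<dots> = cnj t * M i i * t + cnj t * M i j * s + (cnj s * M j i * t + cnj s * M j j * s)"
    by (subst sum_two_supp[OF assms(1-4)]) (simp_all add: xi xj xo)
  finally show ?thesis by (simp add: algebra_simps)
qed

lemma qform1:
  fixes M :: "'a \<Rightarrow> 'a \<Rightarrow> complex"
  assumes "finite S" "i \<in> S" and x: "x = (\<lambda>k. if k = i then 1 else 0)"
  shows "(\<Sum>k\<in>S. \<Sum>l\<in>S. cnj (x k) * M k l * x l) = M i i"
proof -
  have one: "(\<Sum>k\<in>S. g k) = g i" if "\<And>k. k \<in> S \<Longrightarrow> k \<noteq> i \<Longrightarrow> g k = 0" for g :: "'a \<Rightarrow> complex"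
  proof -
    have "(\<Sum>k\<in>S. g k) = (\<Sum>k\<in>{i}. g k)"
      by (rule sum.mono_neutral_right) (use assms that in auto)
    then show ?thesis by simp
  qed
  have inner: "(\<Sum>l\<in>S. cnj (x k) * M k l * x l) = cnj (x k) * M k i" for k
    by (subst one) (simp_all add: x)
  show ?thesis by (simp only: inner, subst one) (simp_all add: x)
qed

lemma density_diag:
  assumes "density_on S M" "finite S" "i \<in> S"
  shows "M i i \<in> \<real>" "Re (M i i) \<ge> 0"
proof -
  define xv where "xv = ((\<lambda>k. if k = i then 1 else 0) :: 'a \<Rightarrow> complex)"
  have "(\<Sum>k\<in>S. \<Sum>l\<in>S. cnj (xv k) * M k l * xv l) \<in> \<real> \<and> Re (\<Sum>k\<in>S. \<Sum>l\<in>S. cnj (xv k) * M k l * xv l) \<ge> 0"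
    using spec[OF conjunct1[OF assms(1)[unfolded density_on_def]], of xv] .
  then show "M i i \<in> \<real>" "Re (M i i) \<ge> 0" using qform1[OF assms(2,3) xv_def, of M] by simp_all
qed

lemma density_cs:
  assumes "density_on S M" "finite S" "i \<in> S" "j \<in> S"
  shows "(cmod (M i j))\<^sup>2 \<le> Re (M i i) * Re (M j j)"
proof (cases "i = j")
  case True
  have "M i i \<in> \<real>" using density_diag(1)[OF assms(1,2,3)] .
  then obtain r where "M i i = of_real r" by (auto elim: Reals_cases)
  then show ?thesis using True by (simp add: power2_eq_square[symmetric])
next
  case False
  define Q where "Q t s = cnj t * M i i * t + cnj t * M i j * s + cnj s * M j i * t + cnj s * M j j * s" for t s
  have pos: "Q t s \<in> \<real> \<and> Re (Q t s) \<ge> 0" for t s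
  proof -
    define xv where "xv = ((\<lambda>k. if k = i then t else if k = j then s else 0) :: 'a \<Rightarrow> complex)"
    have "(\<Sum>k\<in>S. \<Sum>l\<in>S. cnj (xv k) * M k l * xv l) \<in> \<real> \<and> Re (\<Sum>k\<in>S. \<Sum>l\<in>S. cnj (xv k) * M k l * xv l) \<ge> 0"
      using spec[OF conjunct1[OF assms(1)[unfolded density_on_def]], of xv] .
    then show ?thesis unfolding Q_def using qform2[OF assms(2,3,4) False xv_def, of M] by simp
  qed
  have ri: "M i i \<in> \<real>" "Re (M i i) \<ge> 0" using density_diag[OF assms(1,2,3)] by auto
  have rj: "M j j \<in> \<real>" "Re (M j j) \<ge> 0" using density_diag[OF assms(1,2,4)] by auto
  obtain a where a: "M i i = of_real a" "a \<ge> 0" using ri by (metis Re_complex_of_real Reals_cases)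
  obtain b where b: "M j j = of_real b" "b \<ge> 0" using rj by (metis Re_complex_of_real Reals_cases)
  obtain x y where z: "M i j = Complex x y" by (metis complex.collapse)
  obtain u v where z': "M j i = Complex u v" by (metis complex.collapse)
  have h1: "y + v = 0" using pos[of 1 1] unfolding Q_def a b z z' by (simp add: complex_is_Real_iff)
  have h2: "x - u = 0" using pos[of 1 \<i>] unfolding Q_def a b z z' by (simp add: complex_is_Real_iff)
  have uv: "u = x" "v = - y" using h1 h2 by auto
  have q: "Re (Q t s) = a * ((Re t)^2 + (Im t)^2) + b * ((Re s)^2 + (Im s)^2) + 2 * (x * (Re t * Re s + Im t * Im s) - y * (Re t * Im s - Im t * Re s))" for t s
    unfolding Q_def a b z z' uv by (simp add: algebra_simps power2_eq_square)
  have goal: "x^2 + y^2 \<le> a * b"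
  proof -
    consider "b > 0" | "a > 0" | "a = 0" "b = 0" using a b by linarith
    then show ?thesis
    proof cases
      case 1
      have "0 \<le> Re (Q (of_real b) (- Complex x (-y)))" using conjunct2[OF pos] .
      also have "\<dots> = b * (a * b - (x^2+y^2))" unfolding q by (simp add: algebra_simps power2_eq_square)
      finally show ?thesis using 1 by (simp add: zero_le_mult_iff)
    next
      case 2
      have "0 \<le> Re (Q (- Complex x y) (of_real a))" using conjunct2[OF pos] .
      also have "\<dots> = a * (a * b - (x^2+y^2))" unfolding q by (simp add: algebra_simps power2_eq_square)
      finally show ?thesis using 2 by (simp add: zero_le_mult_iff)
    next
      case 3
      have "0 \<le> Re (Q 1 (- Complex x (-y)))" using conjunct2[OF pos] .
      also have "\<dots> = - 2 * (x^2+y^2)" unfolding q using 3 by (simp add: algebra_simps power2_eq_square)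
      finally have "x^2+y^2 \<le> 0" by simp
      then show ?thesis using 3 by simp
    qed
  qed
  moreover have "(cmod (M i j))^2 = x^2+y^2" by (simp only: z cmod_power2 complex.sel)
  ultimately show ?thesis using a b by simp
qed

lemma re_prod_real:
  assumes "A \<in> \<real>" "B \<in> \<real>"
  shows "Re (complex_of_real p * A * B) = p * Re A * Re B"
proof -
  obtain a where "A = of_real a" using assms(1) by (auto elim: Reals_cases)
  moreover obtain b where "B = of_real b" using assms(2) by (auto elim: Reals_cases)
  ultimately show ?thesis by simp
qed

lemma prod_bound:
  fixes s1 s2 t1 t2 u w :: real
  assumes "u\<^sup>2 \<le> s1 * s2" "w\<^sup>2 \<le> t1 * t2" "s1 \<ge> 0" "s2 \<ge> 0" "t1 \<ge> 0" "t2 \<ge> 0" "u \<ge> 0" "w \<ge> 0"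
  shows "u * w \<le> (s1 * t2 + s2 * t1) / 2"
proof -
  have "(u * w)\<^sup>2 \<le> (s1 * t2) * (s2 * t1)"
    using mult_mono[OF assms(1,2)] assms by (simp add: power_mult_distrib mult_ac)
  also have "\<dots> \<le> ((s1 * t2 + s2 * t1) / 2)\<^sup>2"
  proof -
    have "((s1 * t2 + s2 * t1) / 2)\<^sup>2 - (s1 * t2) * (s2 * t1) = ((s1 * t2 - s2 * t1) / 2)\<^sup>2"
      by (simp add: power2_eq_square field_simps)
    moreover have "((s1 * t2 - s2 * t1) / 2)\<^sup>2 \<ge> 0" by simp
    ultimately show ?thesis by linarith
  qed
  finally show ?thesis
    by (rule power2_le_imp_le) (use assms in simp)
qed

lemma bspec_4: "\<forall>x\<in>A. \<forall>y\<in>B. \<forall>z\<in>C. \<forall>w\<in>D. P x y z w \<Longrightarrow> x \<in> A \<Longrightarrow> y \<in> B \<Longrightarrow> z \<in> C \<Longrightarrow> w \<in> D \<Longrightarrow> P x y z w"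
  by blast

lemma sep_bound:
  assumes sep: "separable_on SB SC \<rho>" and fin: "finite SB" "finite SC"
    and mem: "b \<in> SB" "b' \<in> SB" "d \<in> SC" "d' \<in> SC"
  shows "cmod (\<rho> (b,d) (b',d')) \<le> (Re (\<rho> (b,d') (b,d')) + Re (\<rho> (b',d) (b',d))) / 2"
proof -
  obtain n p \<sigma> \<tau> where all: "(\<forall>i<(n::nat). p i \<ge> 0) \<and> (\<Sum>i<n. p i) = 1 \<and> (\<forall>i<n. density_on SB (\<sigma> i) \<and> density_on SC (\<tau> i)) \<and>
        (\<forall>b\<in>SB. \<forall>c\<in>SC. \<forall>b'\<in>SB. \<forall>c'\<in>SC.
            \<rho> (b,c) (b',c') = (\<Sum>i<n. complex_of_real (p i) * \<sigma> i b b' * \<tau> i c c'))"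
    using sep unfolding separable_on_def
    by (elim exE) (erule meta_allE, erule meta_allE, erule meta_allE, erule meta_allE, erule meta_mp, assumption)
  have p: "\<forall>i<n. p i \<ge> 0" using all by (rule conjunct1)
  have dens: "\<forall>i<n. density_on SB (\<sigma> i) \<and> density_on SC (\<tau> i)" using all by (elim conjE)
  have rho: "\<forall>b\<in>SB. \<forall>c\<in>SC. \<forall>b'\<in>SB. \<forall>c'\<in>SC.
            \<rho> (b,c) (b',c') = (\<Sum>i<n. complex_of_real (p i) * \<sigma> i b b' * \<tau> i c c')" using all by (elim conjE)
  have e1: "\<rho> (b,d) (b',d') = (\<Sum>i<n. complex_of_real (p i) * \<sigma> i b b' * \<tau> i d d')"
    using rho mem(1,3,2,4) by (rule bspec_4)
  have e2: "Re (\<rho> (b,d') (b,d')) = (\<Sum>i<n. p i * Re (\<sigma> i b b) * Re (\<tau> i d' d'))"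
  proof -
    have "\<rho> (b,d') (b,d') = (\<Sum>i<n. complex_of_real (p i) * \<sigma> i b b * \<tau> i d' d')"
      using rho mem(1,4,1,4) by (rule bspec_4)
    then have "Re (\<rho> (b,d') (b,d')) = (\<Sum>i<n. Re (complex_of_real (p i) * \<sigma> i b b * \<tau> i d' d'))"
      by (simp add: Re_sum)
    also have "\<dots> = (\<Sum>i<n. p i * Re (\<sigma> i b b) * Re (\<tau> i d' d'))"
      by (rule sum.cong[OF refl], rule re_prod_real)
         (use dens density_diag(1)[OF _ fin(1)] density_diag(1)[OF _ fin(2)] mem in auto)
    finally show ?thesis .
  qed
  have e3: "Re (\<rho> (b',d) (b',d)) = (\<Sum>i<n. p i * Re (\<sigma> i b' b') * Re (\<tau> i d d))"
  proof -
    have "\<rho> (b',d) (b',d) = (\<Sum>i<n. complex_of_real (p i) * \<sigma> i b' b' * \<tau> i d d)"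
      using rho mem(2,3,2,3) by (rule bspec_4)
    then have "Re (\<rho> (b',d) (b',d)) = (\<Sum>i<n. Re (complex_of_real (p i) * \<sigma> i b' b' * \<tau> i d d))"
      by (simp add: Re_sum)
    also have "\<dots> = (\<Sum>i<n. p i * Re (\<sigma> i b' b') * Re (\<tau> i d d))"
      by (rule sum.cong[OF refl], rule re_prod_real)
         (use dens density_diag(1)[OF _ fin(1)] density_diag(1)[OF _ fin(2)] mem in auto)
    finally show ?thesis .
  qed
  have trm: "cmod (complex_of_real (p i) * \<sigma> i b b' * \<tau> i d d')
      \<le> (p i * Re (\<sigma> i b b) * Re (\<tau> i d' d') + p i * Re (\<sigma> i b' b') * Re (\<tau> i d d)) / 2" if i: "i < n" for i
  proof -
    have ds: "density_on SB (\<sigma> i)" and dt: "density_on SC (\<tau> i)" using dens i by auto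
    have pi: "p i \<ge> 0" using p i by auto
    have "cmod (\<sigma> i b b') * cmod (\<tau> i d d') \<le> (Re (\<sigma> i b b) * Re (\<tau> i d' d') + Re (\<sigma> i b' b') * Re (\<tau> i d d)) / 2"
      by (rule prod_bound[OF density_cs[OF ds fin(1) mem(1,2)] density_cs[OF dt fin(2) mem(3,4)]])
         (simp_all add: density_diag(2)[OF ds fin(1)] density_diag(2)[OF dt fin(2)] mem)
    then have "p i * (cmod (\<sigma> i b b') * cmod (\<tau> i d d')) \<le> p i * ((Re (\<sigma> i b b) * Re (\<tau> i d' d') + Re (\<sigma> i b' b') * Re (\<tau> i d d)) / 2)"
      by (rule mult_left_mono) (use pi in auto)
    then show ?thesis using pi by (simp add: norm_mult algebra_simps abs_of_nonneg)
  qed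
  have "cmod (\<rho> (b,d) (b',d')) \<le> (\<Sum>i<n. cmod (complex_of_real (p i) * \<sigma> i b b' * \<tau> i d d'))"
    unfolding e1 by (rule norm_sum)
  also have "\<dots> \<le> (\<Sum>i<n. (p i * Re (\<sigma> i b b) * Re (\<tau> i d' d') + p i * Re (\<sigma> i b' b') * Re (\<tau> i d d)) / 2)"
    by (rule sum_mono) (use trm in auto)
  also have "\<dots> = (Re (\<rho> (b,d') (b,d')) + Re (\<rho> (b',d) (b',d))) / 2"
    unfolding e2 e3 by (simp only: sum_divide_distrib[symmetric] sum.distrib)
  finally show ?thesis .
qed



lemma collapse3:
  fixes X :: "nat \<Rightarrow> nat \<Rightarrow> nat \<Rightarrow> 'b::comm_monoid_add"
  assumes "k1 < K" "k2 < R" "k3 < K"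
  shows "(\<Sum>c<K. \<Sum>w<R. \<Sum>d<K. if c = k1 \<and> w = k2 \<and> d = k3 then X c w d else 0) = X k1 k2 k3"
proof -
  have i1: "(\<Sum>d<K. if c = k1 \<and> w = k2 \<and> d = k3 then X c w d else 0) = (if c = k1 \<and> w = k2 then X c w k3 else 0)" for c w
  proof (cases "c = k1 \<and> w = k2")
    case True then show ?thesis using assms by simp
  next
    case False then show ?thesis by (auto intro!: sum.neutral)
  qed
  have i2: "(\<Sum>w<R. if c = k1 \<and> w = k2 then X c w k3 else 0) = (if c = k1 then X c k2 k3 else 0)" for c
    by (cases "c = k1") (use assms in simp_all)
  show ?thesis by (simp only: i1 i2) (use assms in simp)
qed

lemma phi_props:
  fixes \<alpha> :: "nat \<Rightarrow> complex" and cv :: "nat \<Rightarrow> nat"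
  assumes cv: "\<forall>v<R. cv v < \<kappa>"
    and phi: "phi = (\<lambda>v c w d. if c = cv v \<and> w = v \<and> d = cv v then \<alpha> v else 0)"
  shows "quasirigid_after_cnot R \<kappa> phi"
    and "is_state4 R \<kappa> phi \<longleftrightarrow> (\<Sum>v<R. (cmod (\<alpha> v))\<^sup>2) = 1"
    and "inner4 R \<kappa> phi psi = (\<Sum>v<R. cnj (\<alpha> v) * psi v (cv v) v (cv v))"
proof -
  show "quasirigid_after_cnot R \<kappa> phi"
    unfolding quasirigid_after_cnot_def using cv phi by blast
  have "(\<Sum>v<R. \<Sum>c<\<kappa>. \<Sum>w<R. \<Sum>d<\<kappa>. (cmod (phi v c w d))\<^sup>2)
      = (\<Sum>v<R. \<Sum>c<\<kappa>. \<Sum>w<R. \<Sum>d<\<kappa>. if c = cv v \<and> w = v \<and> d = cv v then (cmod (\<alpha> v))\<^sup>2 else 0)"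
    unfolding phi by (intro sum.cong refl) simp
  also have "\<dots> = (\<Sum>v<R. (cmod (\<alpha> v))\<^sup>2)"
    apply (rule sum.cong[OF refl])
    subgoal for v using collapse3[of "cv v" \<kappa> v R "cv v" "\<lambda>c w d. (cmod (\<alpha> v))\<^sup>2"] cv by simp
    done
  finally show "is_state4 R \<kappa> phi \<longleftrightarrow> (\<Sum>v<R. (cmod (\<alpha> v))\<^sup>2) = 1"
    unfolding is_state4_def by simp
  have "inner4 R \<kappa> phi psi
      = (\<Sum>v<R. \<Sum>c<\<kappa>. \<Sum>w<R. \<Sum>d<\<kappa>. if c = cv v \<and> w = v \<and> d = cv v then cnj (\<alpha> v) * psi v c w d else 0)"
    unfolding inner4_def phi by (intro sum.cong refl) simp
  also have "\<dots> = (\<Sum>v<R. cnj (\<alpha> v) * psi v (cv v) v (cv v))"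
    apply (rule sum.cong[OF refl])
    subgoal for v using collapse3[of "cv v" \<kappa> v R "cv v" "\<lambda>c w d. cnj (\<alpha> v) * psi v c w d"] cv by simp
    done
  finally show "inner4 R \<kappa> phi psi = (\<Sum>v<R. cnj (\<alpha> v) * psi v (cv v) v (cv v))" .
qed



lemma amgm2: "(u::real) * v \<le> (u\<^sup>2 + v\<^sup>2) / 2"
proof -
  have "0 \<le> (u - v)\<^sup>2" by simp
  then show ?thesis by (simp add: power2_eq_square algebra_simps)
qed

lemma rho_re_diag: "Re (rhoBC R psi ((c,w),d) ((c,w),d)) = (\<Sum>v<R. (cmod (psi v c w d))\<^sup>2)"
  unfolding rhoBC_def by (simp add: Re_sum complex_mult_cnj cmod_power2)

lemma pair_bound:
  assumes sep: "separable_on ({..<\<kappa>} \<times> {..<R}) {..<\<kappa>} (rhoBC R psi)"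
    and w: "w < R" and c: "c < \<kappa>" and c': "c' < \<kappa>"
  shows "cmod (psi w c w c) * cmod (psi w c' w c')
     \<le> ((\<Sum>v<R. (cmod (psi v c w c'))\<^sup>2) + (\<Sum>v<R. (cmod (psi v c' w c))\<^sup>2)) / 2
       + (\<Sum>v\<in>{..<R}-{w}. ((cmod (psi v c w c))\<^sup>2 + (cmod (psi v c' w c'))\<^sup>2) / 2)"
proof -
  define \<rho>0 where "\<rho>0 = rhoBC R psi ((c,w),c) ((c',w),c')"
  define rest where "rest = (\<Sum>v\<in>{..<R}-{w}. psi v c w c * cnj (psi v c' w c'))"
  have "\<rho>0 = (\<Sum>v<R. psi v c w c * cnj (psi v c' w c'))"
    unfolding \<rho>0_def by (simp add: rhoBC_def)
  also have "\<dots> = psi w c w c * cnj (psi w c' w c') + rest"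
    unfolding rest_def using w by (simp add: sum.remove[of "{..<R}" w])
  finally have e: "\<rho>0 = psi w c w c * cnj (psi w c' w c') + rest" .
  have "cmod (psi w c w c) * cmod (psi w c' w c') = cmod (\<rho>0 - rest)"
    unfolding e by (simp add: norm_mult)
  also have "\<dots> \<le> cmod \<rho>0 + cmod rest" by (rule norm_triangle_ineq4)
  also have "cmod \<rho>0 \<le> ((\<Sum>v<R. (cmod (psi v c w c'))\<^sup>2) + (\<Sum>v<R. (cmod (psi v c' w c))\<^sup>2)) / 2"
  proof -
    have "cmod \<rho>0 \<le> (Re (rhoBC R psi ((c,w),c') ((c,w),c')) + Re (rhoBC R psi ((c',w),c) ((c',w),c))) / 2"
      unfolding \<rho>0_def by (rule sep_bound[OF sep]) (use w c c' in auto)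
    then show ?thesis by (simp only: rho_re_diag)
  qed
  also have "cmod rest \<le> (\<Sum>v\<in>{..<R}-{w}. ((cmod (psi v c w c))\<^sup>2 + (cmod (psi v c' w c'))\<^sup>2) / 2)"
  proof -
    have "cmod rest \<le> (\<Sum>v\<in>{..<R}-{w}. cmod (psi v c w c * cnj (psi v c' w c')))"
      unfolding rest_def by (rule norm_sum)
    also have "\<dots> \<le> (\<Sum>v\<in>{..<R}-{w}. ((cmod (psi v c w c))\<^sup>2 + (cmod (psi v c' w c'))\<^sup>2) / 2)"
      by (rule sum_mono) (simp only: norm_mult complex_mod_cnj amgm2)
    finally show ?thesis .
  qed
  finally show ?thesis by simp
qed




lemma per_w:
  assumes sep: "separable_on ({..<\<kappa>} \<times> {..<R}) {..<\<kappa>} (rhoBC R psi)"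
    and w: "w < R" and cs: "cs < \<kappa>"
    and mx: "\<forall>c<\<kappa>. cmod (psi w c w c) \<le> cmod (psi w cs w cs)"
  shows "(\<Sum>c<\<kappa>. (cmod (psi w c w c))\<^sup>2) - (cmod (psi w cs w cs))\<^sup>2
     \<le> (\<Sum>c<\<kappa>. \<Sum>d<\<kappa>. if c \<noteq> d then (\<Sum>v<R. (cmod (psi v c w d))\<^sup>2) else 0) / 2
       + real \<kappa> * (\<Sum>c<\<kappa>. \<Sum>v\<in>{..<R}-{w}. (cmod (psi v c w c))\<^sup>2) / 2"
proof -
  define y where "y c = cmod (psi w c w c)" for c
  define M where "M c d = (\<Sum>v<R. (cmod (psi v c w d))\<^sup>2)" for c d
  define r where "r c = (\<Sum>v\<in>{..<R}-{w}. (cmod (psi v c w c))\<^sup>2)" for c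
  define K where "K = {..<\<kappa>}"
  define E1 where "E1 = (\<Sum>c\<in>K. \<Sum>d\<in>K. if c \<noteq> d then M c d else 0)"
  define E2 where "E2 = (\<Sum>c\<in>K. r c)"
  have finK: "finite K" and csK: "cs \<in> K" unfolding K_def using cs by auto
  have Mnn: "M c d \<ge> 0" for c d unfolding M_def by (intro sum_nonneg) auto
  have rnn: "r c \<ge> 0" for c unfolding r_def by (intro sum_nonneg) auto
  have s1: "(\<Sum>c\<in>K. (y c)\<^sup>2) - (y cs)\<^sup>2 = (\<Sum>c\<in>K-{cs}. (y c)\<^sup>2)"
    using sum.remove[OF finK csK, of "\<lambda>c. (y c)\<^sup>2"] by simp
  have s2: "(y c)\<^sup>2 \<le> (M c cs + M cs c) / 2 + (r c + r cs) / 2" if c: "c \<in> K - {cs}" for c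
  proof -
    have cK: "c < \<kappa>" using c unfolding K_def by auto
    have "(y c)\<^sup>2 \<le> y c * y cs"
      unfolding power2_eq_square y_def by (rule mult_left_mono) (use mx cK in auto)
    also have "\<dots> \<le> (M c cs + M cs c) / 2
       + (\<Sum>v\<in>{..<R}-{w}. ((cmod (psi v c w c))\<^sup>2 + (cmod (psi v cs w cs))\<^sup>2) / 2)"
      unfolding y_def M_def by (rule pair_bound[OF sep w cK cs])
    also have "(\<Sum>v\<in>{..<R}-{w}. ((cmod (psi v c w c))\<^sup>2 + (cmod (psi v cs w cs))\<^sup>2) / 2) = (r c + r cs) / 2"
      unfolding r_def by (simp only: sum_divide_distrib[symmetric] sum.distrib)
    finally show ?thesis .
  qed
  have s3: "(\<Sum>c\<in>K-{cs}. (y c)\<^sup>2) \<le> (\<Sum>c\<in>K-{cs}. (M c cs + M cs c) / 2 + (r c + r cs) / 2)"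
    by (rule sum_mono) (rule s2)
  also have s3': "\<dots> = ((\<Sum>c\<in>K-{cs}. M c cs) + (\<Sum>c\<in>K-{cs}. M cs c)) / 2 + (\<Sum>c\<in>K-{cs}. r c) / 2
      + real (card (K-{cs})) * r cs / 2"
  proof -
    have "(\<Sum>c\<in>K-{cs}. (M c cs + M cs c) / 2 + (r c + r cs) / 2) = (\<Sum>c\<in>K-{cs}. M c cs)/2 + (\<Sum>c\<in>K-{cs}. M cs c)/2 + (\<Sum>c\<in>K-{cs}. r c)/2 + (\<Sum>c\<in>K-{cs}. r cs)/2"
      by (simp only: sum.distrib sum_divide_distrib add_divide_distrib add.assoc)
    moreover have "(\<Sum>c\<in>K-{cs}. r cs) = real (card (K-{cs})) * r cs" by simp
    ultimately show ?thesis by (simp only: add_divide_distrib)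
  qed
  finally have s3: "(\<Sum>c\<in>K-{cs}. (y c)\<^sup>2) \<le> ((\<Sum>c\<in>K-{cs}. M c cs) + (\<Sum>c\<in>K-{cs}. M cs c)) / 2 + (\<Sum>c\<in>K-{cs}. r c) / 2
      + real (card (K-{cs})) * r cs / 2" .
  have s4: "(\<Sum>c\<in>K-{cs}. M c cs) + (\<Sum>c\<in>K-{cs}. M cs c) \<le> E1"
  proof -
    define g where "g c = (\<Sum>d\<in>K. if c \<noteq> d then M c d else 0)" for c
    have E1g: "E1 = g cs + (\<Sum>c\<in>K-{cs}. g c)"
      unfolding E1_def g_def by (rule sum.remove[OF finK csK])
    have gcs: "g cs = (\<Sum>d\<in>K-{cs}. M cs d)"
    proof -
      have "g cs = (if cs \<noteq> cs then M cs cs else 0) + (\<Sum>d\<in>K-{cs}. if cs \<noteq> d then M cs d else 0)"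
        unfolding g_def by (rule sum.remove[OF finK csK])
      also have "\<dots> = (\<Sum>d\<in>K-{cs}. M cs d)" by simp
      finally show ?thesis .
    qed
    have gc: "M c cs \<le> g c" if "c \<in> K-{cs}" for c
    proof -
      have "(if c \<noteq> cs then M c cs else 0) \<le> g c"
        unfolding g_def by (rule member_le_sum) (use csK finK Mnn in auto)
      then show ?thesis using that by simp
    qed
    have "(\<Sum>c\<in>K-{cs}. M c cs) \<le> (\<Sum>c\<in>K-{cs}. g c)" by (rule sum_mono) (rule gc)
    then show ?thesis using E1g gcs by simp
  qed
  have s5: "(\<Sum>c\<in>K-{cs}. r c) \<le> E2"
    unfolding E2_def by (rule sum_mono2) (use finK rnn in auto)
  have s6: "r cs \<le> E2"
    unfolding E2_def by (rule member_le_sum) (use csK finK rnn in auto)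
  have card: "real (card (K-{cs})) = real \<kappa> - 1"
    using csK finK cs unfolding K_def by (simp add: of_nat_diff)
  have k1: "real \<kappa> \<ge> 1" using cs by simp
  have s7: "real (card (K-{cs})) * r cs \<le> (real \<kappa> - 1) * E2"
    unfolding card by (rule mult_left_mono[OF s6]) (use k1 in simp)
  have "(\<Sum>c\<in>K. (y c)\<^sup>2) - (y cs)\<^sup>2 \<le> E1 / 2 + real \<kappa> * E2 / 2"
  proof -
    define D where "D = real (card (K-{cs})) * r cs"
    define F where "F = (real \<kappa> - 1) * E2"
    define X where "X = (\<Sum>c\<in>K-{cs}. (y c)\<^sup>2)"
    define A where "A = (\<Sum>c\<in>K-{cs}. M c cs) + (\<Sum>c\<in>K-{cs}. M cs c)"
    define C where "C = (\<Sum>c\<in>K-{cs}. r c)"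
    have "X \<le> A / 2 + C / 2 + D / 2" using s3 unfolding X_def A_def C_def D_def .
    moreover have "D \<le> F" using s7 unfolding D_def F_def .
    moreover have "A \<le> E1" using s4 unfolding A_def .
    moreover have "C \<le> E2" using s5 unfolding C_def .
    ultimately have "X \<le> E1 / 2 + E2 / 2 + F / 2" by linarith
    then have "(\<Sum>c\<in>K. (y c)\<^sup>2) - (y cs)\<^sup>2 \<le> E1 / 2 + E2 / 2 + ((real \<kappa> - 1) * E2) / 2"
      using s1 unfolding X_def F_def by simp
    also have "E1 / 2 + E2 / 2 + ((real \<kappa> - 1) * E2) / 2 = E1 / 2 + real \<kappa> * E2 / 2"
      by (simp add: field_simps)
    finally show ?thesis .
  qed
  then show ?thesis unfolding K_def y_def E1_def M_def E2_def r_def .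
qed




lemma decomp:
  assumes st: "is_state4 R \<kappa> psi"
  shows "(\<Sum>w<R. \<Sum>c<\<kappa>. (cmod (psi w c w c))\<^sup>2)
       + (\<Sum>w<R. \<Sum>c<\<kappa>. \<Sum>d<\<kappa>. if c \<noteq> d then (\<Sum>v<R. (cmod (psi v c w d))\<^sup>2) else 0)
       + (\<Sum>w<R. \<Sum>c<\<kappa>. \<Sum>v\<in>{..<R}-{w}. (cmod (psi v c w c))\<^sup>2) = 1"
proof -
  define f where "f v c w d = (cmod (psi v c w d))\<^sup>2" for v c w d
  have one: "(\<Sum>v<R. \<Sum>c<\<kappa>. \<Sum>w<R. \<Sum>d<\<kappa>. f v c w d) = 1"
    using st unfolding is_state4_def f_def .
  have sw: "(\<Sum>v<R. \<Sum>c<\<kappa>. \<Sum>w<R. \<Sum>d<\<kappa>. f v c w d) = (\<Sum>w<R. \<Sum>c<\<kappa>. \<Sum>d<\<kappa>. \<Sum>v<R. f v c w d)"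
  proof -
    have "(\<Sum>v<R. \<Sum>c<\<kappa>. \<Sum>w<R. \<Sum>d<\<kappa>. f v c w d) = (\<Sum>c<\<kappa>. \<Sum>v<R. \<Sum>w<R. \<Sum>d<\<kappa>. f v c w d)"
      by (rule sum.swap)
    also have "\<dots> = (\<Sum>c<\<kappa>. \<Sum>w<R. \<Sum>v<R. \<Sum>d<\<kappa>. f v c w d)"
      by (rule sum.cong[OF refl], rule sum.swap)
    also have "\<dots> = (\<Sum>c<\<kappa>. \<Sum>w<R. \<Sum>d<\<kappa>. \<Sum>v<R. f v c w d)"
      by (rule sum.cong[OF refl], rule sum.cong[OF refl], rule sum.swap)
    also have "\<dots> = (\<Sum>w<R. \<Sum>c<\<kappa>. \<Sum>d<\<kappa>. \<Sum>v<R. f v c w d)"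
      by (rule sum.swap)
    finally show ?thesis .
  qed
  have inner: "(\<Sum>d<\<kappa>. \<Sum>v<R. f v c w d) = f w c w c + (\<Sum>d<\<kappa>. if c \<noteq> d then (\<Sum>v<R. f v c w d) else 0)
      + (\<Sum>v\<in>{..<R}-{w}. f v c w c)" if w: "w < R" and c: "c < \<kappa>" for w c
  proof -
    have "(\<Sum>d<\<kappa>. \<Sum>v<R. f v c w d) = (\<Sum>d<\<kappa>. (if c \<noteq> d then (\<Sum>v<R. f v c w d) else 0) + (if c = d then (\<Sum>v<R. f v c w d) else 0))"
      by (rule sum.cong) auto
    also have "\<dots> = (\<Sum>d<\<kappa>. if c \<noteq> d then (\<Sum>v<R. f v c w d) else 0) + (\<Sum>v<R. f v c w c)"
      using c by (simp add: sum.distrib)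
    also have "(\<Sum>v<R. f v c w c) = f w c w c + (\<Sum>v\<in>{..<R}-{w}. f v c w c)"
      using w by (simp add: sum.remove[of "{..<R}" w])
    finally show ?thesis by simp
  qed
  have "(\<Sum>w<R. \<Sum>c<\<kappa>. \<Sum>d<\<kappa>. \<Sum>v<R. f v c w d)
      = (\<Sum>w<R. \<Sum>c<\<kappa>. f w c w c + (\<Sum>d<\<kappa>. if c \<noteq> d then (\<Sum>v<R. f v c w d) else 0)
      + (\<Sum>v\<in>{..<R}-{w}. f v c w c))"
    by (intro sum.cong refl inner) auto
  also have "\<dots> = (\<Sum>w<R. \<Sum>c<\<kappa>. f w c w c) + (\<Sum>w<R. \<Sum>c<\<kappa>. \<Sum>d<\<kappa>. if c \<noteq> d then (\<Sum>v<R. f v c w d) else 0)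
      + (\<Sum>w<R. \<Sum>c<\<kappa>. \<Sum>v\<in>{..<R}-{w}. f v c w c)"
    by (simp only: sum.distrib)
  finally show ?thesis using one sw unfolding f_def by simp
qed




theorem lemma4p4:
  fixes R \<kappa> :: nat and psi :: "nat \<Rightarrow> nat \<Rightarrow> nat \<Rightarrow> nat \<Rightarrow> complex" and \<epsilon> :: real
  assumes "R \<ge> 1" and "\<kappa> \<ge> 1"
    and "is_state4 R \<kappa> psi"
    and "matchcheck_prob R \<kappa> psi = 1 - \<epsilon>"
    and "separable_on ({..<\<kappa>} \<times> {..<R}) {..<\<kappa>} (rhoBC R psi)"
  shows "\<exists>phi. is_state4 R \<kappa> phi \<and> quasirigid_after_cnot R \<kappa> phi \<and>
           (cmod (inner4 R \<kappa> phi psi))\<^sup>2 \<ge> 1 - (real \<kappa> + 1) * \<epsilon>"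
proof -
  note R1 = assms(1) and k1 = assms(2) and st = assms(3) and mc = assms(4) and sep = assms(5)
  define y where "y w c = cmod (psi w c w c)" for w c
  have ex: "\<exists>cs. cs < \<kappa> \<and> (\<forall>c<\<kappa>. y w c \<le> y w cs)" for w
  proof -
    define S where "S = y w ` {..<\<kappa>}"
    have fS: "finite S" unfolding S_def by auto
    have "y w 0 \<in> S" unfolding S_def using k1 by auto
    then have nS: "S \<noteq> {}" by auto
    have "Max S \<in> S" using Max_in[OF fS nS] .
    then obtain cs where cs: "cs < \<kappa>" "Max S = y w cs" unfolding S_def by auto
    have "\<forall>c<\<kappa>. y w c \<le> y w cs"
    proof (intro allI impI)
      fix c assume "c < \<kappa>"
      then have "y w c \<in> S" unfolding S_def by auto
      then show "y w c \<le> y w cs" using Max_ge[OF fS] cs(2) by metis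
    qed
    then show ?thesis using cs(1) by blast
  qed
  define cv where "cv w = (SOME cs. cs < \<kappa> \<and> (\<forall>c<\<kappa>. y w c \<le> y w cs))" for w
  have cv: "cv w < \<kappa> \<and> (\<forall>c<\<kappa>. y w c \<le> y w (cv w))" for w
    unfolding cv_def by (rule someI_ex[OF ex])
  define G where "G = (\<Sum>w<R. (y w (cv w))\<^sup>2)"
  define P where "P = (\<Sum>w<R. \<Sum>c<\<kappa>. (y w c)\<^sup>2)"
  define E1 where "E1 w = (\<Sum>c<\<kappa>. \<Sum>d<\<kappa>. if c \<noteq> d then (\<Sum>v<R. (cmod (psi v c w d))\<^sup>2) else 0)" for w
  define E2 where "E2 w = (\<Sum>c<\<kappa>. \<Sum>v\<in>{..<R}-{w}. (cmod (psi v c w c))\<^sup>2)" for w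
  have per: "(\<Sum>c<\<kappa>. (y w c)\<^sup>2) - (y w (cv w))\<^sup>2 \<le> E1 w / 2 + real \<kappa> * E2 w / 2" if "w < R" for w
    unfolding y_def E1_def E2_def
    by (rule per_w[OF sep that]) (use cv[of w] in \<open>auto simp: y_def\<close>)
  have "P - G = (\<Sum>w<R. (\<Sum>c<\<kappa>. (y w c)\<^sup>2) - (y w (cv w))\<^sup>2)"
    unfolding P_def G_def by (simp add: sum_subtractf)
  also have "\<dots> \<le> (\<Sum>w<R. E1 w / 2 + real \<kappa> * E2 w / 2)"
    by (rule sum_mono) (use per in auto)
  also have "\<dots> = (\<Sum>w<R. E1 w) / 2 + real \<kappa> * (\<Sum>w<R. E2 w) / 2"
    by (simp add: sum.distrib sum_divide_distrib sum_distrib_left)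
  finally have PG: "P - G \<le> (\<Sum>w<R. E1 w) / 2 + real \<kappa> * (\<Sum>w<R. E2 w) / 2" .
  have dec: "P + (\<Sum>w<R. E1 w) + (\<Sum>w<R. E2 w) = 1"
    using decomp[OF st] unfolding P_def E1_def E2_def y_def .
  have Pe: "P = 1 - \<epsilon>" using mc unfolding matchcheck_prob_def P_def y_def .
  have E1nn: "(\<Sum>w<R. E1 w) \<ge> 0" unfolding E1_def by (intro sum_nonneg) (auto intro: sum_nonneg)
  have E2nn: "(\<Sum>w<R. E2 w) \<ge> 0" unfolding E2_def by (intro sum_nonneg) auto
  have Gnn: "G \<ge> 0" unfolding G_def by (intro sum_nonneg) auto
  have Gb: "G \<ge> 1 - (real \<kappa> + 1) * \<epsilon>"
  proof -
    define A where "A = (\<Sum>w<R. E1 w)"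
    define B where "B = (\<Sum>w<R. E2 w)"
    have eps: "\<epsilon> = A + B" using dec Pe unfolding A_def B_def by linarith
    have kA: "real \<kappa> * A \<ge> A" using E1nn k1 unfolding A_def by (simp add: mult_le_cancel_right1)
    have kB: "real \<kappa> * B \<ge> 0" using E2nn unfolding B_def by simp
    have ex: "(real \<kappa> + 1) * \<epsilon> = real \<kappa> * A + real \<kappa> * B + A + B" unfolding eps by (simp add: algebra_simps)
    have "P - G \<le> A / 2 + real \<kappa> * B / 2" using PG unfolding A_def B_def .
    moreover have "A \<ge> 0" using E1nn unfolding A_def .
    ultimately show ?thesis using ex kA kB Pe eps by linarith
  qed
  show ?thesis
  proof (cases "G > 0")
    case True
    define \<alpha> where "\<alpha> v = psi v (cv v) v (cv v) / complex_of_real (sqrt G)" for v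
    define phi where "phi = (\<lambda>v c w d. if c = cv v \<and> w = v \<and> d = cv v then \<alpha> v else (0::complex))"
    have cvR: "\<forall>v<R. cv v < \<kappa>" using cv by blast
    note pp = phi_props[OF cvR phi_def]
    have sq: "sqrt G > 0" using True by simp
    have a2: "(cmod (\<alpha> v))\<^sup>2 = (y v (cv v))\<^sup>2 / G" for v
      unfolding \<alpha>_def y_def using sq True by (simp add: norm_divide power_divide)
    have "(\<Sum>v<R. (cmod (\<alpha> v))\<^sup>2) = G / G" unfolding a2 G_def by (simp only: sum_divide_distrib[symmetric])
    then have s1: "is_state4 R \<kappa> phi" using pp(2) True by simp
    have ca: "cnj (\<alpha> v) * psi v (cv v) v (cv v) = complex_of_real ((y v (cv v))\<^sup>2 / sqrt G)" for v
    proof -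
      have "cnj (\<alpha> v) * psi v (cv v) v (cv v) = (cnj (psi v (cv v) v (cv v)) * psi v (cv v) v (cv v)) / complex_of_real (sqrt G)"
        unfolding \<alpha>_def by simp
      also have "cnj (psi v (cv v) v (cv v)) * psi v (cv v) v (cv v) = complex_of_real ((y v (cv v))\<^sup>2)"
        unfolding y_def by (simp add: complex_mult_cnj cmod_power2 mult.commute[of "cnj _"])
      finally show ?thesis by simp
    qed
    have "inner4 R \<kappa> phi psi = complex_of_real (G / sqrt G)"
      unfolding pp(3) ca G_def by (simp only: sum_divide_distrib[symmetric] of_real_sum[symmetric])
    also have "G / sqrt G = sqrt G"
      using True by (metis less_eq_real_def nonzero_mult_div_cancel_left real_div_sqrt)
    finally have "(cmod (inner4 R \<kappa> phi psi))\<^sup>2 = (sqrt G)\<^sup>2" using sq by simp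
    then have "(cmod (inner4 R \<kappa> phi psi))\<^sup>2 = G" using True by simp
    then show ?thesis using s1 pp(1) Gb by auto
  next
    case False
    then have G0: "G = 0" using Gnn by simp
    define \<alpha> where "\<alpha> v = (if v = 0 then 1 else (0::complex))" for v :: nat
    define phi where "phi = (\<lambda>v c w d. if c = (\<lambda>_. 0::nat) v \<and> w = v \<and> d = (\<lambda>_. 0::nat) v then \<alpha> v else (0::complex))"
    have cvR: "\<forall>v<R. (\<lambda>_. 0::nat) v < \<kappa>" using k1 by simp
    note pp = phi_props[where cv="\<lambda>_. 0::nat", OF cvR phi_def]
    have "(\<Sum>v<R. (cmod (\<alpha> v))\<^sup>2) = 1"
    proof -
      have "(\<Sum>v<R. (cmod (\<alpha> v))\<^sup>2) = (\<Sum>v<R. if v = 0 then 1 else 0)"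
        unfolding \<alpha>_def by (intro sum.cong) auto
      also have "\<dots> = 1" using R1 by simp
      finally show ?thesis .
    qed
    then have s1: "is_state4 R \<kappa> phi" using pp(2) by simp
    have "1 - (real \<kappa> + 1) * \<epsilon> \<le> (cmod (inner4 R \<kappa> phi psi))\<^sup>2" using Gb G0 zero_le_power2[of "cmod (inner4 R \<kappa> phi psi)"] by linarith
    then show ?thesis using s1 pp(1) by blast
  qed
qed

end
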